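(* Let $R$ be a commutative ring, $I=(f_1,\dots,f_r)$, $\mathfrak a=(a_1,\dots,a_s)\subseteq I$, $\Phi=(c_{ij})$ an $r\times s$ matrix with $a_j=\sum_ic_{ij}f_i$, and $\Gamma_\bullet$ as in the context. Let $\langle Z_1(\mathbf f;R)\rangle$ denote the $R$-subalgebra of $K_\bullet(\mathbf f;R)$ generated by the Koszul cycles of degree one. Then $$\langle\Gamma_\bullet\cdot\langle Z_1(\mathbf f;R)\rangle\rangle_r=\operatorname{Fitt}_0(I/\mathfrak a).$$ In particular, if the algebra of Koszul cycles $Z_\bullet(\mathbf f;R)$ is generated by cycles of degree one, then $\operatorname{Kitt}(\mathfrak a,I)=\operatorname{Fitt}_0(I/\mathfrak a)$.
   Context: $K_\bullet(\mathbf f;R)$ is the Koszul DG algebra: exterior algebra over $R$ on $e_1,\dots,e_r$ with $\partial e_i=f_i$. $\zeta_j=\sum_ic_{ij}e_i$, $\Gamma_\bullet$ the subalgebra generated by $\zeta_1,\dots,\zeta_s$, $Z_\bullet=Z_\bullet(\mathbf f;R)$ the subalgebra of cycles. For graded subalgebras $A_\bullet,B_\bullet$, $\langle A_\bullet\cdot B_\bullet\rangle_r$ is the degree-$r$ part of the subalgebra they generate, i.e. the span of $x\wedge y$ with $x\in A_j$, $y\in B_{r-j}$, identified with an ideal of $R$ via $K_r=Re_1\wedge\cdots\wedge e_r\cong R$. $\operatorname{Kitt}(\mathfrak a,I):=\langle\Gamma_\bullet\cdot Z_\bullet\rangle_r$. $\operatorname{Fitt}_0$ is the zeroth Fitting ideal.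 *)

theory Defs
  imports "HOL-Combinatorics.Permutations"
begin

text \<open>An element is represented by its coefficient function on subsets S of {..<r}:
x S is the coefficient of e_S (the wedge of the e_i, i in S, in increasing order).\<close>

type_synonym 'a kel = "nat set \<Rightarrow> 'a"

definition kelem :: "nat \<Rightarrow> 'a::comm_ring_1 kel \<Rightarrow> bool" where
  "kelem r x \<longleftrightarrow> (\<forall>S. x S \<noteq> 0 \<longrightarrow> S \<subseteq> {..<r})"

definition homog :: "nat \<Rightarrow> 'a::comm_ring_1 kel \<Rightarrow> bool" where
  "homog k x \<longleftrightarrow> (\<forall>S. x S \<noteq> 0 \<longrightarrow> card S = k)"

definition kone :: "'a::comm_ring_1 kel" where
  "kone = (\<lambda>S. if S = {} then 1 else 0)"

definition kadd :: "'a::comm_ring_1 kel \<Rightarrow> 'a kel \<Rightarrow> 'a kel" where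
  "kadd x y = (\<lambda>S. x S + y S)"

definition ksmult :: "'a::comm_ring_1 \<Rightarrow> 'a kel \<Rightarrow> 'a kel" where
  "ksmult c x = (\<lambda>S. c * x S)"

text \<open>Sign of e_S wedge e_T for disjoint S, T: (-1)^(number of inversions).\<close>
definition wsign :: "nat set \<Rightarrow> nat set \<Rightarrow> 'a::comm_ring_1" where
  "wsign S T = (- 1) ^ card {(s, t). s \<in> S \<and> t \<in> T \<and> t < s}"

definition wedge :: "'a::comm_ring_1 kel \<Rightarrow> 'a kel \<Rightarrow> 'a kel" where
  "wedge x y = (\<lambda>U. \<Sum>S\<in>Pow U. wsign S (U - S) * x S * y (U - S))"

definition ebasis :: "nat \<Rightarrow> 'a::comm_ring_1 kel" where
  "ebasis i = (\<lambda>S. if S = {i} then 1 else 0)"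

text \<open>Koszul differential: d(e_i) = f_i, extended as a graded derivation.\<close>
definition kdiff :: "nat \<Rightarrow> (nat \<Rightarrow> 'a::comm_ring_1) \<Rightarrow> 'a kel \<Rightarrow> 'a kel" where
  "kdiff r f x = (\<lambda>T. \<Sum>i\<in>{..<r} - T. (- 1) ^ card {j\<in>T. j < i} * f i * x (insert i T))"

definition kcycles :: "nat \<Rightarrow> (nat \<Rightarrow> 'a::comm_ring_1) \<Rightarrow> 'a kel set" where
  "kcycles r f = {x. kelem r x \<and> kdiff r f x = (\<lambda>_. 0)}"

definition kcycles1 :: "nat \<Rightarrow> (nat \<Rightarrow> 'a::comm_ring_1) \<Rightarrow> 'a kel set" where
  "kcycles1 r f = {x \<in> kcycles r f. homog 1 x}"

inductive_set subalg :: "'a::comm_ring_1 kel set \<Rightarrow> 'a kel set" for G where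
  one: "kone \<in> subalg G"
| gen: "x \<in> G \<Longrightarrow> x \<in> subalg G"
| add: "x \<in> subalg G \<Longrightarrow> y \<in> subalg G \<Longrightarrow> kadd x y \<in> subalg G"
| smult: "x \<in> subalg G \<Longrightarrow> ksmult c x \<in> subalg G"
| mult: "x \<in> subalg G \<Longrightarrow> y \<in> subalg G \<Longrightarrow> wedge x y \<in> subalg G"

definition zeta :: "nat \<Rightarrow> (nat \<Rightarrow> nat \<Rightarrow> 'a::comm_ring_1) \<Rightarrow> nat \<Rightarrow> 'a kel" where
  "zeta r c j = (\<lambda>S. \<Sum>i<r. c i j * ebasis i S)"

definition Gamma :: "nat \<Rightarrow> (nat \<Rightarrow> nat \<Rightarrow> 'a::comm_ring_1) \<Rightarrow> nat \<Rightarrow> 'a kel set" where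
  "Gamma r c s = subalg (zeta r c ` {..<s})"

definition ideal_gen :: "'a::comm_ring_1 set \<Rightarrow> 'a set" where
  "ideal_gen G = {\<Sum>k<n. a k * g k | (n::nat) a g. \<forall>k<n. g k \<in> G}"

text \<open>< A . B >_r : span of x wedge y with x in A_j, y in B_(r-j), identified with an
ideal of R via K_r = R e_0 ^ ... ^ e_(r-1) (coefficient of e_{0..r-1}).\<close>
definition prod_part :: "nat \<Rightarrow> 'a::comm_ring_1 kel set \<Rightarrow> 'a kel set \<Rightarrow> 'a set" where
  "prod_part r A B = ideal_gen
     {wedge x y {..<r} | x y j. j \<le> r \<and> x \<in> A \<and> homog j x \<and> y \<in> B \<and> homog (r - j) y}"

definition Kitt :: "nat \<Rightarrow> (nat \<Rightarrow> 'a::comm_ring_1) \<Rightarrow> (nat \<Rightarrow> nat \<Rightarrow> 'a) \<Rightarrow> nat \<Rightarrow> 'a set" where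
  "Kitt r f c s = prod_part r (Gamma r c s) (kcycles r f)"

definition detn :: "nat \<Rightarrow> (nat \<Rightarrow> nat \<Rightarrow> 'a::comm_ring_1) \<Rightarrow> 'a" where
  "detn r M = (\<Sum>p | p permutes {..<r}. of_int (sign p) * (\<Prod>i<r. M i (p i)))"

text \<open>Fitt_0(I/J) for I = (f_0..f_(r-1)), computed from the presentation of I/J with
generators the classes of the f_i: the relation module consists of the vectors v with
sum_i v_i f_i in J, and Fitt_0 is generated by the r x r minors of matrices whose
columns are relations.\<close>
definition Fitt0 :: "nat \<Rightarrow> (nat \<Rightarrow> 'a::comm_ring_1) \<Rightarrow> 'a set \<Rightarrow> 'a set" where
  "Fitt0 r f J = ideal_gen
     {detn r (\<lambda>i k. V k i) | V. \<forall>k<r. (\<Sum>i<r. V k i * f i) \<in> J}"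

end

theory Submission
  imports Defs
begin

definition kzero :: "'a::comm_ring_1 kel" where "kzero = (\<lambda>_. 0)"

definition fin :: "'a::comm_ring_1 kel \<Rightarrow> bool" where
  "fin x \<longleftrightarrow> (\<forall>U. x U \<noteq> 0 \<longrightarrow> finite U)"

lemma kelem_fin: "kelem r x \<Longrightarrow> fin x"
  unfolding kelem_def fin_def by (meson finite_lessThan finite_subset)

lemma wedge_kadd_left: "wedge (kadd x y) z = kadd (wedge x z) (wedge y z)"
  unfolding wedge_def kadd_def by (auto simp: algebra_simps sum.distrib)

lemma wedge_kadd_right: "wedge x (kadd y z) = kadd (wedge x y) (wedge x z)"
  unfolding wedge_def kadd_def by (auto simp: algebra_simps sum.distrib)

lemma wedge_ksmult_left: "wedge (ksmult c x) y = ksmult c (wedge x y)"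
  unfolding wedge_def ksmult_def by (auto simp: algebra_simps sum_distrib_left)

lemma wedge_ksmult_right: "wedge x (ksmult c y) = ksmult c (wedge x y)"
  unfolding wedge_def ksmult_def by (auto simp: algebra_simps sum_distrib_left)

lemma wedge_kzero_left: "wedge kzero x = kzero"
  unfolding wedge_def kzero_def by auto

lemma wedge_kzero_right: "wedge x kzero = kzero"
  unfolding wedge_def kzero_def by auto

lemma ksmult_ksmult: "ksmult a (ksmult b x) = ksmult (a*b) x"
  unfolding ksmult_def by (auto simp: algebra_simps)

lemma ksmult_kzero: "ksmult c kzero = kzero"
  unfolding ksmult_def kzero_def by auto

lemma ksmult_one: "ksmult 1 x = x"
  unfolding ksmult_def by auto

lemma wsign_empty_left: "wsign {} T = 1"
  by (simp add: wsign_def)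

lemma wsign_empty_right: "wsign S {} = 1"
  by (simp add: wsign_def)

lemma wedge_infinite: "infinite U \<Longrightarrow> wedge x y U = 0"
  unfolding wedge_def by simp

lemma wedge_kone_left: assumes "fin x" shows "wedge kone x = x"
proof
  fix U
  show "wedge kone x U = x U"
  proof (cases "finite U")
    case True
    have "wedge kone x U = (\<Sum>S\<in>Pow U. if S = {} then x U else 0)"
      unfolding wedge_def kone_def by (intro sum.cong) (auto simp: wsign_empty_left)
    also have "\<dots> = x U" by (simp add: sum.delta' True)
    finally show ?thesis .
  next
    case False
    then show ?thesis by (metis assms fin_def wedge_infinite)
  qed
qed

lemma wedge_kone_right: assumes "fin x" shows "wedge x kone = x"
proof
  fix U
  show "wedge x kone U = x U"
  proof (cases "finite U")
    case True
    have "wedge x kone U = (\<Sum>S\<in>Pow U. if S = U then x U else 0)"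
      unfolding wedge_def kone_def by (intro sum.cong) (auto simp: wsign_empty_right)
    also have "\<dots> = x U" by (simp add: sum.delta' True)
    finally show ?thesis .
  next
    case False
    then show ?thesis by (metis assms fin_def wedge_infinite)
  qed
qed

definition ninv :: "nat set \<Rightarrow> nat set \<Rightarrow> nat" where
  "ninv S T = card {(s, t). s \<in> S \<and> t \<in> T \<and> t < s}"

lemma wsign_ninv: "wsign S T = (- 1) ^ ninv S T"
  by (simp add: wsign_def ninv_def)

lemma ninv_Un_left:
  assumes "finite X" "finite Y" "finite Z" "X \<inter> Y = {}"
  shows "ninv (X \<union> Y) Z = ninv X Z + ninv Y Z"
proof -
  have e: "{(s, t). s \<in> X \<union> Y \<and> t \<in> Z \<and> t < s} =
     {(s, t). s \<in> X \<and> t \<in> Z \<and> t < s} \<union> {(s, t). s \<in> Y \<and> t \<in> Z \<and> t < s}" by auto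
  have f1: "finite {(s, t). s \<in> X \<and> t \<in> Z \<and> t < s}"
    by (rule finite_subset[of _ "X \<times> Z"]) (use assms in auto)
  have f2: "finite {(s, t). s \<in> Y \<and> t \<in> Z \<and> t < s}"
    by (rule finite_subset[of _ "Y \<times> Z"]) (use assms in auto)
  show ?thesis unfolding ninv_def e
    by (rule card_Un_disjoint[OF f1 f2]) (use assms in auto)
qed

lemma ninv_Un_right:
  assumes "finite X" "finite Y" "finite Z" "Y \<inter> Z = {}"
  shows "ninv X (Y \<union> Z) = ninv X Y + ninv X Z"
proof -
  have e: "{(s, t). s \<in> X \<and> t \<in> Y \<union> Z \<and> t < s} =
     {(s, t). s \<in> X \<and> t \<in> Y \<and> t < s} \<union> {(s, t). s \<in> X \<and> t \<in> Z \<and> t < s}" by auto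
  have f1: "finite {(s, t). s \<in> X \<and> t \<in> Y \<and> t < s}"
    by (rule finite_subset[of _ "X \<times> Y"]) (use assms in auto)
  have f2: "finite {(s, t). s \<in> X \<and> t \<in> Z \<and> t < s}"
    by (rule finite_subset[of _ "X \<times> Z"]) (use assms in auto)
  show ?thesis unfolding ninv_def e
    by (rule card_Un_disjoint[OF f1 f2]) (use assms in auto)
qed

lemma wsign_assoc:
  assumes "finite U" "A \<subseteq> U" "B \<subseteq> U - A"
  shows "(wsign (A \<union> B) (U - A - B) :: 'a::comm_ring_1) * wsign A B = wsign A (U - A) * wsign B (U - A - B)"
proof -
  have fin: "finite A" "finite B" "finite (U - A - B)" using assms by (auto intro: finite_subset)
  have "U - A = B \<union> (U - A - B)" using assms by auto
  then have "ninv A (U - A) = ninv A B + ninv A (U - A - B)"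
    using ninv_Un_right[of A B "U - A - B"] fin by auto
  moreover have "ninv (A \<union> B) (U - A - B) = ninv A (U - A - B) + ninv B (U - A - B)"
    using ninv_Un_left[of A B "U - A - B"] fin assms by auto
  ultimately show ?thesis unfolding wsign_ninv by (simp add: power_add[symmetric] add_ac)
qed

lemma wedge_assoc: "wedge (wedge x y) z = wedge x (wedge y z)"
proof
  fix U
  show "wedge (wedge x y) z U = wedge x (wedge y z) U"
  proof (cases "finite U")
    case False
    then show ?thesis by (simp add: wedge_infinite)
  next
    case True
    define F where "F A S = wsign S (U - S) * wsign A (S - A) * x A * y (S - A) * z (U - S)" for A S
    have "wedge (wedge x y) z U = (\<Sum>S\<in>Pow U. \<Sum>A\<in>{A\<in>Pow U. A \<subseteq> S}. F A S)"
      unfolding wedge_def F_def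
    proof (rule sum.cong[OF refl])
      fix S assume "S \<in> Pow U"
      then have "Pow S = {A\<in>Pow U. A \<subseteq> S}" by auto
      then show "wsign S (U - S) * (\<Sum>A\<in>Pow S. wsign A (S - A) * x A * y (S - A)) * z (U - S) =
        (\<Sum>A\<in>{A \<in> Pow U. A \<subseteq> S}. wsign S (U - S) * wsign A (S - A) * x A * y (S - A) * z (U - S))"
        by (simp add: sum_distrib_left sum_distrib_right algebra_simps)
    qed
    also have "\<dots> = (\<Sum>A\<in>Pow U. \<Sum>S\<in>{S\<in>Pow U. A \<subseteq> S}. F A S)"
      by (rule sum.swap_restrict) (use True in auto)
    also have "\<dots> = (\<Sum>A\<in>Pow U. \<Sum>B\<in>Pow (U - A). F A (A \<union> B))"
    proof (rule sum.cong[OF refl])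
      fix A assume A: "A \<in> Pow U"
      show "(\<Sum>S\<in>{S\<in>Pow U. A \<subseteq> S}. F A S) = (\<Sum>B\<in>Pow (U - A). F A (A \<union> B))"
        apply (rule sum.reindex_bij_witness[of _ "\<lambda>B. A \<union> B" "\<lambda>S. S - A"])
        using A apply (auto simp: Un_absorb1)
        done
    qed
    also have "\<dots> = wedge x (wedge y z) U"
      unfolding wedge_def
    proof (rule sum.cong[OF refl])
      fix A assume A: "A \<in> Pow U"
      have "(\<Sum>B\<in>Pow (U - A). F A (A \<union> B)) =
         (\<Sum>B\<in>Pow (U - A). wsign A (U - A) * x A * (wsign B (U - A - B) * y B * z (U - A - B)))"
      proof (intro sum.cong refl)
        fix B assume B: "B \<in> Pow (U - A)"
        have e1: "A \<union> B - A = B" "U - (A \<union> B) = U - A - B" using B by auto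
        have s: "(wsign (A \<union> B) (U - A - B) :: 'a) * wsign A B = wsign A (U - A) * wsign B (U - A - B)"
          by (rule wsign_assoc) (use True A B in auto)
        show "F A (A \<union> B) = wsign A (U - A) * x A * (wsign B (U - A - B) * y B * z (U - A - B))"
          unfolding F_def e1 using s by (simp add: algebra_simps)
      qed
      then show "(\<Sum>B\<in>Pow (U - A). F A (A \<union> B)) =
        wsign A (U - A) * x A * (\<Sum>B\<in>Pow (U - A). wsign B (U - A - B) * y B * z (U - A - B))"
        by (simp add: sum_distrib_left)
    qed
    finally show ?thesis .
  qed
qed

lemma wedge_nonzero:
  assumes "wedge x y U \<noteq> 0"
  shows "finite U \<and> (\<exists>S\<subseteq>U. x S \<noteq> 0 \<and> y (U - S) \<noteq> 0)"
proof -
  have "finite U" using assms wedge_infinite by blast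
  moreover have "\<exists>S\<subseteq>U. x S \<noteq> 0 \<and> y (U - S) \<noteq> 0"
  proof (rule ccontr)
    assume "\<not> ?thesis"
    then have "wedge x y U = 0" unfolding wedge_def by (intro sum.neutral) auto
    then show False using assms by simp
  qed
  ultimately show ?thesis by blast
qed

lemma fin_wedge: "fin (wedge x y)"
  unfolding fin_def using wedge_nonzero by blast

lemma fin_kone: "fin kone"
  unfolding fin_def kone_def by auto

lemma homog_fin: "homog (Suc k) x \<Longrightarrow> fin x"
  unfolding homog_def fin_def by (metis card.infinite nat.distinct(1))

lemma homog_wedge:
  assumes "homog a x" "homog b y" shows "homog (a + b) (wedge x y)"
  unfolding homog_def
proof (intro allI impI)
  fix U assume "wedge x y U \<noteq> 0"
  then obtain S where S: "finite U" "S \<subseteq> U" "x S \<noteq> 0" "y (U - S) \<noteq> 0"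
    using wedge_nonzero by blast
  then have "card S = a" "card (U - S) = b" using assms unfolding homog_def by auto
  moreover have "card U = card S + card (U - S)"
    using S by (metis card_Diff_subset card_mono finite_subset le_add_diff_inverse)
  ultimately show "card U = a + b" by simp
qed

lemma kelem_wedge:
  assumes "kelem r x" "kelem r y" shows "kelem r (wedge x y)"
  unfolding kelem_def
proof (intro allI impI)
  fix U assume "wedge x y U \<noteq> 0"
  then obtain S where S: "finite U" "S \<subseteq> U" "x S \<noteq> 0" "y (U - S) \<noteq> 0"
    using wedge_nonzero by blast
  then have "S \<subseteq> {..<r}" "U - S \<subseteq> {..<r}" using assms unfolding kelem_def by auto
  then show "U \<subseteq> {..<r}" by auto
qed

lemma homog_kadd: "homog k x \<Longrightarrow> homog k y \<Longrightarrow> homog k (kadd x y)"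
  unfolding homog_def kadd_def by (metis add.right_neutral)
lemma homog_ksmult: "homog k x \<Longrightarrow> homog k (ksmult c x)"
  unfolding homog_def ksmult_def by (metis mult_zero_right)
lemma homog_kzero: "homog k kzero"
  unfolding homog_def kzero_def by auto
lemma homog_kone: "homog 0 kone"
  unfolding homog_def kone_def by auto
lemma kelem_kadd: "kelem r x \<Longrightarrow> kelem r y \<Longrightarrow> kelem r (kadd x y)"
  unfolding kelem_def kadd_def by (metis add.right_neutral)
lemma kelem_ksmult: "kelem r x \<Longrightarrow> kelem r (ksmult c x)"
  unfolding kelem_def ksmult_def by (metis mult_zero_right)
lemma kelem_kzero: "kelem r kzero"
  unfolding kelem_def kzero_def by auto
lemma kelem_kone: "kelem r kone"
  unfolding kelem_def kone_def by auto

lemma wedge_deg1_pair: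
  assumes u: "homog 1 u" and w: "homog 1 w" and ab: "a < b"
  shows "wedge u w {a, b} = u {a} * w {b} - u {b} * w {a}"
proof -
  have z: "\<forall>S\<in>Pow {a, b} - {{a}, {b}}. wsign S ({a, b} - S) * u S * w ({a, b} - S) = 0"
  proof
    fix S assume S: "S \<in> Pow {a, b} - {{a}, {b}}"
    have "card S \<noteq> 1"
    proof
      assume "card S = 1"
      then obtain z where "S = {z}" using card_1_singletonE by blast
      then show False using S by auto
    qed
    then have "u S = 0" using u unfolding homog_def by auto
    then show "wsign S ({a, b} - S) * u S * w ({a, b} - S) = 0" by simp
  qed
  have "wedge u w {a, b} = (\<Sum>S\<in>{{a}, {b}}. wsign S ({a, b} - S) * u S * w ({a, b} - S))"
    unfolding wedge_def by (rule sum.mono_neutral_right) (use z in auto)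
  also have "\<dots> = wsign {a} {b} * u {a} * w {b} + wsign {b} {a} * u {b} * w {a}"
    using ab by (simp add: insert_Diff_if)
  also have "wsign {a} {b} = (1::'a)"
  proof -
    have e: "{(s, t). s \<in> {a} \<and> t \<in> {b} \<and> t < s} = {}" using ab by auto
    show ?thesis unfolding wsign_def e by simp
  qed
  also have "wsign {b} {a} = (- 1::'a)"
  proof -
    have e: "{(s, t). s \<in> {b} \<and> t \<in> {a} \<and> t < s} = {(b, a)}" using ab by auto
    show ?thesis unfolding wsign_def e by simp
  qed
  finally show ?thesis by simp
qed

lemma card2_cases:
  assumes "card (U::nat set) = 2"
  obtains a b where "a < b" "U = {a, b}"
proof -
  obtain a b where "U = {a, b}" "a \<noteq> b" using assms card_2_iff by metis
  then show ?thesis using that by (metis insert_commute linorder_neqE_nat)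
qed

lemma wedge_deg1_anticomm:
  assumes u: "homog 1 u" and w: "homog 1 w"
  shows "wedge u w = ksmult (- 1) (wedge w u)"
proof
  fix U
  show "wedge u w U = ksmult (- 1) (wedge w u) U"
  proof (cases "card U = 2")
    case True
    then obtain a b where ab: "a < b" "U = {a, b}" by (rule card2_cases)
    have e1: "wedge u w {a, b} = u {a} * w {b} - u {b} * w {a}" by (rule wedge_deg1_pair[OF u w ab(1)])
    have e2: "wedge w u {a, b} = w {a} * u {b} - w {b} * u {a}" by (rule wedge_deg1_pair[OF w u ab(1)])
    have "wedge u w {a, b} + wedge w u {a, b} = 0" unfolding e1 e2 by (simp add: algebra_simps)
    then show ?thesis using ab(2) by (simp add: ksmult_def eq_neg_iff_add_eq_0)
  next
    case False
    have "homog (1 + 1) (wedge u w)" "homog (1 + 1) (wedge w u)"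
      using homog_wedge u w by blast+
    then have "wedge u w U = 0" "wedge w u U = 0" using False unfolding homog_def by (metis one_add_one)+
    then show ?thesis by (simp add: ksmult_def)
  qed
qed

lemma wedge_deg1_self:
  assumes u: "homog 1 u"
  shows "wedge u u = kzero"
proof
  fix U
  show "wedge u u U = kzero U"
  proof (cases "card U = 2")
    case True
    then obtain a b where "a < b" "U = {a, b}" by (rule card2_cases)
    then show ?thesis using wedge_deg1_pair[OF u u]
      by (simp add: kzero_def algebra_simps)
  next
    case False
    have "homog (1 + 1) (wedge u u)"
      using homog_wedge u by blast
    then show ?thesis using False unfolding homog_def kzero_def by fastforce
  qed
qed

definition P :: "'a::comm_ring_1 kel list \<Rightarrow> 'a kel" where
  "P xs = foldr wedge xs kone"

lemma P_Nil: "P [] = kone" by (simp add: P_def)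
lemma P_Cons: "P (x # xs) = wedge x (P xs)" by (simp add: P_def)

lemma fin_P: "fin (P xs)"
  by (cases xs) (auto simp: P_def fin_kone fin_wedge)

lemma P_append: "P (xs @ ys) = wedge (P xs) (P ys)"
  by (induction xs) (auto simp: P_Nil P_Cons wedge_kone_left fin_P wedge_assoc)

lemma homog_P: "(\<forall>x\<in>set xs. homog 1 x) \<Longrightarrow> homog (length xs) (P xs)"
proof (induction xs)
  case Nil then show ?case by (simp add: P_Nil homog_kone)
next
  case (Cons x xs)
  then show ?case using homog_wedge[of 1 x "length xs" "P xs"] by (simp add: P_Cons)
qed

lemma kelem_P: "(\<forall>x\<in>set xs. kelem r x) \<Longrightarrow> kelem r (P xs)"
  by (induction xs) (auto simp: P_Nil P_Cons kelem_kone kelem_wedge)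

lemma P_anticomm:
  assumes u: "homog 1 u" and xs: "\<forall>x\<in>set xs. homog 1 x"
  shows "wedge (P xs) u = ksmult ((- 1) ^ length xs) (wedge u (P xs))"
  using xs
proof (induction xs)
  case Nil
  then show ?case using homog_fin[of 0 u] u
    by (simp add: P_Nil wedge_kone_left wedge_kone_right ksmult_one)
next
  case (Cons x xs)
  have x: "homog 1 x" using Cons by simp
  have "wedge (P (x # xs)) u = wedge x (wedge (P xs) u)" by (simp add: P_Cons wedge_assoc)
  also have "\<dots> = ksmult ((- 1) ^ length xs) (wedge (wedge x u) (P xs))"
    using Cons by (simp add: wedge_ksmult_right wedge_assoc)
  also have "\<dots> = ksmult ((- 1) ^ length xs) (wedge (ksmult (-1) (wedge u x)) (P xs))"
    using wedge_deg1_anticomm[OF x u] by simp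
  also have "\<dots> = ksmult ((- 1) ^ length (x # xs)) (wedge u (P (x # xs)))"
    by (simp add: wedge_ksmult_left ksmult_ksmult P_Cons wedge_assoc algebra_simps)
  finally show ?case .
qed

lemma P_move:
  assumes x: "homog 1 x" and y: "homog 1 y" and ys: "\<forall>z\<in>set ys. homog 1 z"
  shows "wedge x (P (ys @ y # zs)) = ksmult ((- 1) ^ length ys) (wedge (wedge (wedge x y) (P ys)) (P zs))"
proof -
  have "P (ys @ y # zs) = wedge (wedge (P ys) y) (P zs)"
    by (simp add: P_append P_Cons wedge_assoc)
  also have "\<dots> = ksmult ((- 1) ^ length ys) (wedge (wedge y (P ys)) (P zs))"
    using P_anticomm[OF y ys] by (simp add: wedge_ksmult_left)
  finally show ?thesis by (simp add: wedge_ksmult_right wedge_assoc)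
qed

lemma P_swap:
  assumes "homog 1 x" "homog 1 y" "\<forall>z\<in>set ys. homog 1 z"
  shows "P (xs @ x # ys @ y # zs) = ksmult (- 1) (P (xs @ y # ys @ x # zs))"
proof -
  have "P (xs @ x # ys @ y # zs) = wedge (P xs) (wedge x (P (ys @ y # zs)))"
    by (simp add: P_append P_Cons)
  also have "\<dots> = wedge (P xs) (ksmult ((- 1) ^ length ys) (wedge (wedge (wedge x y) (P ys)) (P zs)))"
    using P_move assms by metis
  also have "\<dots> = wedge (P xs) (ksmult ((- 1) ^ length ys) (wedge (wedge (ksmult (-1) (wedge y x)) (P ys)) (P zs)))"
    using wedge_deg1_anticomm assms by metis
  also have "\<dots> = ksmult (- 1) (wedge (P xs) (ksmult ((- 1) ^ length ys) (wedge (wedge (wedge y x) (P ys)) (P zs))))"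
    by (simp add: wedge_ksmult_left wedge_ksmult_right ksmult_ksmult algebra_simps)
  also have "\<dots> = ksmult (- 1) (P (xs @ y # ys @ x # zs))"
    using P_move[of y x ys zs] assms by (simp add: P_append P_Cons)
  finally show ?thesis .
qed

lemma P_rep:
  assumes "homog 1 x" "\<forall>z\<in>set ys. homog 1 z"
  shows "P (xs @ x # ys @ x # zs) = kzero"
proof -
  have "P (xs @ x # ys @ x # zs) = wedge (P xs) (wedge x (P (ys @ x # zs)))"
    by (simp add: P_append P_Cons)
  also have "\<dots> = kzero"
    using P_move[of x x ys zs] assms
    by (simp add: wedge_deg1_self wedge_kzero_left wedge_kzero_right ksmult_kzero)
  finally show ?thesis .
qed

lemma homog_ebasis: "homog 1 (ebasis i)"
  unfolding homog_def ebasis_def by auto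

lemma homog_ebasis_Suc0[simp]: "homog (Suc 0) (ebasis i)"
  using homog_ebasis by simp

lemma kelem_ebasis: "i < r \<Longrightarrow> kelem r (ebasis i)"
  unfolding kelem_def ebasis_def by auto

lemma deg1_repr:
  assumes "kelem n u" "homog 1 u"
  shows "u = (\<lambda>S. \<Sum>i<n. u {i} * ebasis i S)"
proof
  fix S
  show "u S = (\<Sum>i<n. u {i} * ebasis i S)"
  proof (cases "\<exists>i0<n. S = {i0}")
    case True
    then obtain i0 where i0: "i0 < n" "S = {i0}" by blast
    have "(\<Sum>i<n. u {i} * ebasis i S) = (\<Sum>i<n. if i = i0 then u {i0} else 0)"
      by (intro sum.cong) (auto simp: ebasis_def i0)
    also have "\<dots> = u S" using i0 by simp
    finally show ?thesis by simp
  next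
    case False
    have "u S = 0"
    proof (rule ccontr)
      assume "u S \<noteq> 0"
      then have "card S = 1" "S \<subseteq> {..<n}" using assms unfolding homog_def kelem_def by auto
      then show False using False by (metis card_1_singletonE insert_subset lessThan_iff)
    qed
    moreover have "(\<Sum>i<n. u {i} * ebasis i S) = 0"
      using False by (intro sum.neutral) (auto simp: ebasis_def)
    ultimately show ?thesis by simp
  qed
qed

lemma wedge_sums:
  "wedge (\<lambda>S. \<Sum>i\<in>I. c i * F i S) (\<lambda>S. \<Sum>j\<in>J. d j * G j S) U =
   (\<Sum>i\<in>I. \<Sum>j\<in>J. c i * d j * wedge (F i) (G j) U)"
proof -
  have "wedge (\<lambda>S. \<Sum>i\<in>I. c i * F i S) (\<lambda>S. \<Sum>j\<in>J. d j * G j S) U =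
     (\<Sum>S\<in>Pow U. \<Sum>i\<in>I. \<Sum>j\<in>J. c i * d j * (wsign S (U - S) * F i S * G j (U - S)))"
    unfolding wedge_def
    by (intro sum.cong refl) (simp add: sum_product sum_distrib_left algebra_simps)
  also have "\<dots> = (\<Sum>i\<in>I. \<Sum>S\<in>Pow U. \<Sum>j\<in>J. c i * d j * (wsign S (U - S) * F i S * G j (U - S)))"
    by (rule sum.swap)
  also have "\<dots> = (\<Sum>i\<in>I. \<Sum>j\<in>J. \<Sum>S\<in>Pow U. c i * d j * (wsign S (U - S) * F i S * G j (U - S)))"
    by (intro sum.cong refl sum.swap)
  also have "\<dots> = (\<Sum>i\<in>I. \<Sum>j\<in>J. c i * d j * wedge (F i) (G j) U)"
    unfolding wedge_def by (simp add: sum_distrib_left)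
  finally show ?thesis .
qed

definition wt :: "'a::comm_ring_1 kel list \<Rightarrow> nat list \<Rightarrow> 'a" where
  "wt us gs = prod_list (map2 (\<lambda>u g. u {g}) us gs)"

definition Eb :: "nat list \<Rightarrow> 'a::comm_ring_1 kel" where
  "Eb gs = P (map ebasis gs)"

definition L :: "nat \<Rightarrow> nat \<Rightarrow> nat list set" where
  "L n m = {gs. set gs \<subseteq> {..<n} \<and> length gs = m}"

lemma P_expand:
  assumes "\<forall>u\<in>set us. u = (\<lambda>S. \<Sum>i<n. u {i} * ebasis i S)"
  shows "P us = (\<lambda>U. \<Sum>gs\<in>L n (length us). wt us gs * Eb gs U)"
  using assms
proof (induction us)
  case Nil
  have "L n 0 = {[]}" unfolding L_def by auto
  then show ?case by (simp add: wt_def Eb_def P_Nil)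
next
  case (Cons u us)
  have IH: "P us = (\<lambda>U. \<Sum>gs\<in>L n (length us). wt us gs * Eb gs U)" using Cons by simp
  have u: "u = (\<lambda>S. \<Sum>i<n. u {i} * ebasis i S)" using Cons by simp
  show ?case
  proof
    fix U
    have "P (u # us) U = wedge (\<lambda>S. \<Sum>i<n. u {i} * ebasis i S) (\<lambda>S. \<Sum>gs\<in>L n (length us). wt us gs * Eb gs S) U"
      using u IH by (simp add: P_Cons)
    also have "\<dots> = (\<Sum>i<n. \<Sum>gs\<in>L n (length us). u {i} * wt us gs * wedge (ebasis i) (Eb gs) U)"
      by (rule wedge_sums)
    also have "\<dots> = (\<Sum>(gs, i)\<in>L n (length us) \<times> {..<n}. wt (u # us) (i # gs) * Eb (i # gs) U)"
      by (subst sum.swap) (simp add: sum.cartesian_product wt_def Eb_def P_Cons algebra_simps)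
    also have "\<dots> = (\<Sum>gs\<in>L n (length (u # us)). wt (u # us) gs * Eb gs U)"
      unfolding L_def lists_length_Suc_eq length_Cons
      by (subst sum.reindex) (auto simp: inj_split_Cons case_prod_beta)
    finally show "P (u # us) U = (\<Sum>gs\<in>L n (length (u # us)). wt (u # us) gs * Eb gs U)" .
  qed
qed

lemma Eb_rep: "\<not> distinct gs \<Longrightarrow> Eb gs = kzero"
proof -
  assume "\<not> distinct gs"
  then obtain as bs cs y where gs: "gs = as @ [y] @ bs @ [y] @ cs" using not_distinct_decomp by blast
  show "Eb gs = kzero" unfolding Eb_def gs
    using P_rep[of "ebasis y" "map ebasis bs" "map ebasis as" "map ebasis cs"]
    by (simp add: homog_ebasis)
qed

lemma Eb_swap: "Eb (as @ x # bs @ y # cs) = ksmult (- 1) (Eb (as @ y # bs @ x # cs))"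
  unfolding Eb_def
  using P_swap[of "ebasis x" "ebasis y" "map ebasis bs" "map ebasis as" "map ebasis cs"]
  by (simp add: homog_ebasis)

lemma wedge_ebasis_left:
  assumes "finite U"
  shows "wedge (ebasis i) y U = (if i \<in> U then wsign {i} (U - {i}) * y (U - {i}) else 0)"
proof -
  have "wedge (ebasis i) y U = (\<Sum>S\<in>Pow U. if S = {i} then wsign {i} (U - {i}) * y (U - {i}) else 0)"
    unfolding wedge_def ebasis_def by (intro sum.cong) auto
  also have "\<dots> = (if i \<in> U then wsign {i} (U - {i}) * y (U - {i}) else 0)"
    using assms by (simp add: sum.delta')
  finally show ?thesis .
qed

lemma Eb_upt: "Eb [k..<n] = (\<lambda>S. if S = {k..<n} then 1 else 0)"
proof (induction "n - k" arbitrary: k)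
  case 0
  then show ?case by (simp add: Eb_def P_Nil kone_def)
next
  case (Suc d)
  then have kn: "k < n" by simp
  have IH: "Eb [Suc k..<n] = (\<lambda>S. if S = {Suc k..<n} then 1 else (0::'a))"
  proof -
    have "d = n - Suc k" using Suc.hyps(2) by arith
    then show ?thesis by (rule Suc(1))
  qed
  have e: "Eb [k..<n] = wedge (ebasis k) (Eb [Suc k..<n] :: 'a kel)"
    using kn by (simp add: upt_conv_Cons Eb_def P_Cons)
  show ?case
  proof
    fix U
    show "Eb [k..<n] U = (if U = {k..<n} then 1 else (0::'a))"
    proof (cases "finite U")
      case False
      have "Eb [k..<n] U = (0::'a)" using False by (simp add: e wedge_infinite)
      moreover have "U \<noteq> {k..<n}" using False by auto
      ultimately show ?thesis by simp
    next
      case True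
      have ws: "wsign {k} {Suc k..<n} = (1::'a)"
      proof -
        have e: "{(s, t). s \<in> {k} \<and> t \<in> {Suc k..<n} \<and> t < s} = {}" by auto
        show ?thesis unfolding wsign_def e by simp
      qed
      have s: "{k..<n} = insert k {Suc k..<n}" using kn by auto
      have s2: "{k..<n} - {k} = {Suc k..<n}" by auto
      have iff: "(k \<in> U \<and> U - {k} = {Suc k..<n}) \<longleftrightarrow> U = {k..<n}"
      proof
        assume h: "k \<in> U \<and> U - {k} = {Suc k..<n}"
        then have "U = insert k (U - {k})" by blast
        then show "U = {k..<n}" using h s by simp
      next
        assume "U = {k..<n}"
        then show "k \<in> U \<and> U - {k} = {Suc k..<n}" using kn s2 by simp
      qed
      have l: "Eb [k..<n] U = (if k \<in> U then wsign {k} (U - {k}) * (if U - {k} = {Suc k..<n} then 1 else 0) else (0::'a))"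
        unfolding e wedge_ebasis_left[OF True] IH by simp
      show ?thesis
      proof (cases "U = {k..<n}")
        case True
        then have "k \<in> U" "U - {k} = {Suc k..<n}" using iff by blast+
        then show ?thesis using l ws True by simp
      next
        case False
        then have "\<not> (k \<in> U \<and> U - {k} = {Suc k..<n})" using iff by blast
        then show ?thesis using l False by auto
      qed
    qed
  qed
qed

lemma map_transpose_id:
  assumes "a \<notin> set xs" "b \<notin> set xs"
  shows "map (transpose a b) xs = xs"
proof (rule map_idI)
  fix x assume "x \<in> set xs"
  then have "x \<noteq> a" "x \<noteq> b" using assms by auto
  then show "transpose a b x = x" by (rule transpose_apply_other)
qed

lemma Eb_transpose:
  assumes "distinct xs" "a \<in> set xs" "b \<in> set xs" "a \<noteq> b"
  shows "Eb (map (transpose a b) xs) = ksmult (- 1) (Eb xs)"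
proof -
  obtain ys zs where xs: "xs = ys @ a # zs" using split_list assms(2) by metis
  have "b \<in> set ys \<or> b \<in> set zs" using assms(3,4) xs by auto
  then show ?thesis
  proof
    assume "b \<in> set ys"
    then obtain as bs where ys: "ys = as @ b # bs" using split_list by metis
    have xs': "xs = as @ b # bs @ a # zs" using xs ys by simp
    have d: "a \<notin> set as" "a \<notin> set bs" "a \<notin> set zs" "b \<notin> set as" "b \<notin> set bs" "b \<notin> set zs"
      using assms(1) unfolding xs' by simp_all
    have m: "map (transpose a b) xs = as @ a # bs @ b # zs"
      unfolding xs' using map_transpose_id[OF d(1,4)] map_transpose_id[OF d(2,5)] map_transpose_id[OF d(3,6)]
      by simp
    have "Eb (map (transpose a b) xs) = Eb (as @ a # bs @ b # zs)" using m by simp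
    also have "\<dots> = ksmult (- 1) (Eb (as @ b # bs @ a # zs))" by (rule Eb_swap)
    finally show ?thesis using xs' by simp
  next
    assume "b \<in> set zs"
    then obtain bs cs where zs: "zs = bs @ b # cs" using split_list by metis
    have xs': "xs = ys @ a # bs @ b # cs" using xs zs by simp
    have d: "a \<notin> set ys" "a \<notin> set bs" "a \<notin> set cs" "b \<notin> set ys" "b \<notin> set bs" "b \<notin> set cs"
      using assms(1) unfolding xs' by simp_all
    have m: "map (transpose a b) xs = ys @ b # bs @ a # cs"
      unfolding xs' using map_transpose_id[OF d(1,4)] map_transpose_id[OF d(2,5)] map_transpose_id[OF d(3,6)]
      by simp
    have "Eb (map (transpose a b) xs) = Eb (ys @ b # bs @ a # cs)" using m by simp
    also have "\<dots> = ksmult (- 1) (Eb (ys @ a # bs @ b # cs))"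
      unfolding Eb_swap[of ys a bs b cs] ksmult_ksmult by (simp add: ksmult_one)
    finally show ?thesis using xs' by simp
  qed
qed

lemma Eb_perm:
  assumes "p permutes {..<n}"
  shows "Eb (map p [0..<n]) {..<n} = of_int (sign p)"
  using assms finite_lessThan
proof (induction p rule: permutes_induct)
  case id
  then show ?case by (simp add: Eb_upt atLeast0LessThan)
next
  case (swap a b p)
  have d: "distinct (map p [0..<n])"
    using swap.hyps(4) by (simp add: distinct_map permutes_inj_on)
  have h: "p permutes {..<n}" by (rule swap.hyps(4))
  have ia: "inv p a < n" "inv p b < n"
    using permutes_in_image[OF permutes_inv[OF h]] swap.hyps(1,2) by auto
  have "a \<in> p ` {0..<n}" by (rule image_eqI[of _ _ "inv p a"]) (use ia permutes_inverses(1)[OF h] in auto)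
  moreover have "b \<in> p ` {0..<n}" by (rule image_eqI[of _ _ "inv p b"]) (use ia permutes_inverses(1)[OF h] in auto)
  ultimately have ab: "a \<in> set (map p [0..<n])" "b \<in> set (map p [0..<n])" by auto
  have "sign (transpose a b \<circ> p) = - sign p"
    using sign_compose[OF permutation_swap_id permutes_imp_permutation[OF _ swap.hyps(4)]] swap.hyps(3)
    by (simp add: sign_swap_id)
  moreover have "map (transpose a b \<circ> p) [0..<n] = map (transpose a b) (map p [0..<n])" by simp
  moreover have "Eb (map (transpose a b) (map p [0..<n])) {..<n} = - (Eb (map p [0..<n]) {..<n} :: 'a)"
    using fun_cong[OF Eb_transpose[OF d ab swap.hyps(3)], of "{..<n}"] by (simp add: ksmult_def)
  ultimately show ?case
    using swap.IH by (simp add: o_def)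
qed

lemma wt_nth:
  "length us = n \<Longrightarrow> length gs = n \<Longrightarrow> wt us gs = (\<Prod>k<n. (us ! k) {gs ! k})"
proof (induction us arbitrary: gs n)
  case Nil
  then show ?case by (simp add: wt_def)
next
  case (Cons u us)
  then obtain g gs' where gs: "gs = g # gs'" by (cases gs) auto
  obtain m where n: "n = Suc m" using Cons by auto
  have "wt us gs' = (\<Prod>k<m. (us ! k) {gs' ! k})" using Cons gs n by simp
  then show ?case unfolding gs n prod.lessThan_Suc_shift by (simp add: wt_def del: prod.lessThan_Suc)
qed

lemma perm_list_map:
  "length gs = n \<Longrightarrow> map (\<lambda>k. if k < n then gs ! k else k) [0..<n] = gs"
  by (rule nth_equalityI) simp_all

lemma perm_list_bij:
  assumes "gs \<in> L n n" "distinct gs"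
  shows "(\<lambda>k. if k < n then gs ! k else k) permutes {..<n}"
proof (rule bij_imp_permutes)
  let ?p = "\<lambda>k. if k < n then gs ! k else k"
  have len: "length gs = n" and sub: "set gs \<subseteq> {..<n}" using assms(1) unfolding L_def by auto
  have inj: "inj_on ?p {..<n}"
  proof (rule inj_onI)
    fix x y assume xy: "x \<in> {..<n}" "y \<in> {..<n}" "?p x = ?p y"
    then have "gs ! x = gs ! y" by simp
    then show "x = y" using nth_eq_iff_index_eq[OF assms(2)] xy len by simp
  qed
  have img: "?p ` {..<n} \<subseteq> {..<n}"
  proof
    fix z assume "z \<in> ?p ` {..<n}"
    then obtain k where k: "k < n" "z = gs ! k" by auto
    then have "z \<in> set gs" using len by simp
    then show "z \<in> {..<n}" using sub by blast
  qed
  have "?p ` {..<n} = {..<n}" by (rule endo_inj_surj[OF finite_lessThan img inj])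
  then show "bij_betw ?p {..<n} {..<n}" using inj by (simp add: bij_betw_def)
  show "\<And>x. x \<notin> {..<n} \<Longrightarrow> ?p x = x" by simp
qed

lemma P_det:
  assumes len: "length us = n" and us: "\<forall>u\<in>set us. kelem n u \<and> homog 1 u"
  shows "P us {..<n} = detn n (\<lambda>i k. (us ! k) {i})"
proof -
  have rep: "\<forall>u\<in>set us. u = (\<lambda>S. \<Sum>i<n. u {i} * ebasis i S)"
  proof
    fix u assume "u \<in> set us"
    then have "kelem n u" "homog 1 u" using us by auto
    then show "u = (\<lambda>S. \<Sum>i<n. u {i} * ebasis i S)" by (rule deg1_repr)
  qed
  have "P us {..<n} = (\<Sum>gs\<in>L n n. wt us gs * Eb gs {..<n})"
    using P_expand[OF rep] len by simp
  also have "\<dots> = (\<Sum>gs\<in>{gs\<in>L n n. distinct gs}. wt us gs * Eb gs {..<n})"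
  proof (rule sum.mono_neutral_right)
    show "finite (L n n)" unfolding L_def by (simp add: finite_lists_length_eq)
    show "{gs \<in> L n n. distinct gs} \<subseteq> L n n" by auto
    show "\<forall>i\<in>L n n - {gs \<in> L n n. distinct gs}. wt us i * Eb i {..<n} = 0"
    proof
      fix gs assume "gs \<in> L n n - {gs \<in> L n n. distinct gs}"
      then have "\<not> distinct gs" by simp
      then show "wt us gs * Eb gs {..<n} = 0" by (simp add: Eb_rep kzero_def)
    qed
  qed
  also have "\<dots> = (\<Sum>p\<in>{p. p permutes {..<n}}. wt us (map p [0..<n]) * Eb (map p [0..<n]) {..<n})"
  proof (rule sum.reindex_bij_witness[of _ "\<lambda>p. map p [0..<n]" "\<lambda>gs k. if k < n then gs ! k else k"])
    fix p assume "p \<in> {p. p permutes {..<n}}"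
    then have p: "p permutes {..<n}" by simp
    show "(\<lambda>k. if k < n then map p [0..<n] ! k else k) = p"
    proof
      fix k show "(if k < n then map p [0..<n] ! k else k) = p k"
        using permutes_not_in[OF p, of k] by auto
    qed
    have "set (map p [0..<n]) \<subseteq> {..<n}"
    proof
      fix z assume "z \<in> set (map p [0..<n])"
      then obtain k where k: "k < n" "z = p k" by auto
      then show "z \<in> {..<n}" using permutes_in_image[OF p, of k] by simp
    qed
    moreover have "distinct (map p [0..<n])"
      using p by (simp add: distinct_map permutes_inj_on)
    ultimately show "map p [0..<n] \<in> {gs \<in> L n n. distinct gs}" unfolding L_def by simp
  next
    fix gs assume gs: "gs \<in> {gs \<in> L n n. distinct gs}"
    then have len': "length gs = n" unfolding L_def by simp
    show "map (\<lambda>k. if k < n then gs ! k else k) [0..<n] = gs"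
      using len' by (rule perm_list_map)
    show "(\<lambda>k. if k < n then gs ! k else k) \<in> {p. p permutes {..<n}}"
      using perm_list_bij gs by auto
  qed (simp add: perm_list_map L_def)
  also have "\<dots> = (\<Sum>p\<in>{p. p permutes {..<n}}. of_int (sign p) * (\<Prod>k<n. (us ! k) {p k}))"
  proof (rule sum.cong[OF refl])
    fix p assume "p \<in> {p. p permutes {..<n}}"
    then have p: "p permutes {..<n}" by simp
    have "wt us (map p [0..<n]) = (\<Prod>k<n. (us ! k) {p k})"
      using wt_nth[OF len, of "map p [0..<n]"] by simp
    then show "wt us (map p [0..<n]) * Eb (map p [0..<n]) {..<n} = of_int (sign p) * (\<Prod>k<n. (us ! k) {p k})"
      using Eb_perm[OF p, where 'a = 'a] by (simp add: mult.commute)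
  qed
  also have "\<dots> = (\<Sum>p\<in>{p. p permutes {..<n}}. of_int (sign (inv p)) * (\<Prod>i<n. (us ! inv p i) {i}))"
  proof (rule sum.cong[OF refl])
    fix p assume "p \<in> {p. p permutes {..<n}}"
    then have p: "p permutes {..<n}" by simp
    have si: "sign (inv p) = sign p"
      using sign_inverse permutes_imp_permutation[OF finite_lessThan p] by blast
    have "(\<Prod>i<n. (us ! inv p i) {i}) = (\<Prod>k<n. (us ! inv p (p k)) {p k})"
      using prod.reindex_bij_betw[OF permutes_imp_bij[OF p], of "\<lambda>i. (us ! inv p i) {i}"] by simp
    also have "\<dots> = (\<Prod>k<n. (us ! k) {p k})" by (simp add: permutes_inverses(2)[OF p])
    finally show "of_int (sign p) * (\<Prod>k<n. (us ! k) {p k}) = of_int (sign (inv p)) * (\<Prod>i<n. (us ! inv p i) {i})"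
      using si by simp
  qed
  also have "\<dots> = detn n (\<lambda>i k. (us ! k) {i})"
    unfolding detn_def by (rule sum_permutations_inverse[symmetric])
  finally show ?thesis .
qed

section \<open>Ideals\<close>

definition is_ideal :: "'a::comm_ring_1 set \<Rightarrow> bool" where
  "is_ideal I \<longleftrightarrow> 0 \<in> I \<and> (\<forall>x\<in>I. \<forall>y\<in>I. x + y \<in> I) \<and> (\<forall>c. \<forall>x\<in>I. c * x \<in> I)"

lemma sum_lessThan_add_split:
  "(\<Sum>k<n + (m::nat). f k) = (\<Sum>k<n. f k) + (\<Sum>k<m. f (n + k))"
  by (induction m) (simp_all add: algebra_simps)

lemma ideal_gen_elem:
  "x \<in> ideal_gen G \<Longrightarrow> \<exists>(n::nat) a g. x = (\<Sum>k<n. a k * g k) \<and> (\<forall>k<n. g k \<in> G)"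
  by (simp add: ideal_gen_def)

lemma ideal_gen_is_ideal: "is_ideal (ideal_gen G)"
  unfolding is_ideal_def
proof (intro conjI ballI allI)
  show "0 \<in> ideal_gen G" unfolding ideal_gen_def
    by (rule CollectI, rule exI[of _ 0]) auto
next
  fix x y assume xm: "x \<in> ideal_gen G" and ym: "y \<in> ideal_gen G"
  obtain n a g where x: "x = (\<Sum>k<(n::nat). a k * g k)" "\<forall>k<n. g k \<in> G"
    using ideal_gen_elem[OF xm] by blast
  obtain m b h where y: "y = (\<Sum>k<(m::nat). b k * h k)" "\<forall>k<m. h k \<in> G"
    using ideal_gen_elem[OF ym] by blast
  define a' where "a' k = (if k < n then a k else b (k - n))" for k
  define g' where "g' k = (if k < n then g k else h (k - n))" for k
  have s1: "(\<Sum>k<n. a' k * g' k) = x" unfolding x(1) a'_def g'_def by (intro sum.cong) auto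
  have s2: "(\<Sum>k<m. a' (n + k) * g' (n + k)) = y" unfolding y(1) a'_def g'_def by (intro sum.cong) auto
  have "x + y = (\<Sum>k<n + m. a' k * g' k)"
    unfolding sum_lessThan_add_split s1 s2 ..
  moreover have "\<forall>k<n + m. g' k \<in> G"
  proof (intro allI impI)
    fix k assume k: "k < n + m"
    show "g' k \<in> G"
    proof (cases "k < n")
      case True then show ?thesis using x(2) unfolding g'_def by simp
    next
      case False
      then have "k - n < m" using k by simp
      then show ?thesis using y(2) False unfolding g'_def by simp
    qed
  qed
  ultimately show "x + y \<in> ideal_gen G" unfolding ideal_gen_def by blast
next
  fix c x assume xm: "x \<in> ideal_gen G"
  obtain n a g where x: "x = (\<Sum>k<(n::nat). a k * g k)" "\<forall>k<n. g k \<in> G"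
    using ideal_gen_elem[OF xm] by blast
  have cx: "c * x = (\<Sum>k<n. (c * a k) * g k)" unfolding x by (simp add: sum_distrib_left algebra_simps)
  show "c * x \<in> ideal_gen G" unfolding ideal_gen_def
    by (rule CollectI, rule exI[of _ n], rule exI[of _ "\<lambda>k. c * a k"], rule exI[of _ g]) (use x cx in auto)
qed

lemma ideal_gen_sub: "g \<in> G \<Longrightarrow> g \<in> ideal_gen G"
  unfolding ideal_gen_def
  by (rule CollectI, rule exI[of _ 1], rule exI[of _ "\<lambda>_. 1"], rule exI[of _ "\<lambda>_. g"]) auto

lemma ideal_gen_least:
  assumes "is_ideal I" "G \<subseteq> I"
  shows "ideal_gen G \<subseteq> I"
proof
  fix x assume "x \<in> ideal_gen G"
  then obtain n a g where x: "x = (\<Sum>k<(n::nat). a k * g k)" "\<forall>k<n. g k \<in> G"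
    using ideal_gen_elem by blast
  have "\<forall>k<n. g k \<in> G \<Longrightarrow> (\<Sum>k<n. a k * g k) \<in> I" for n :: nat
  proof (induction n)
    case 0 then show ?case using assms(1) unfolding is_ideal_def by simp
  next
    case (Suc n)
    then have "(\<Sum>k<n. a k * g k) \<in> I" "a n * g n \<in> I"
      using assms unfolding is_ideal_def by auto
    then show ?case using assms(1) unfolding is_ideal_def by simp
  qed
  then show "x \<in> I" using x by simp
qed

lemma is_ideal_zero: "is_ideal I \<Longrightarrow> 0 \<in> I"
  unfolding is_ideal_def by simp

lemma ideal_gen_repr:
  assumes "x \<in> ideal_gen (a ` {..<(s::nat)})"
  shows "\<exists>b. x = (\<Sum>j<s. b j * a j)"
proof -
  let ?I = "{y. \<exists>b. y = (\<Sum>j<s. b j * a j)}"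
  have "is_ideal ?I" unfolding is_ideal_def
  proof (intro conjI ballI allI)
    show "0 \<in> ?I" by (rule CollectI, rule exI[of _ "\<lambda>_. 0"]) simp
  next
    fix x y assume "x \<in> ?I" "y \<in> ?I"
    then obtain b b' where "x = (\<Sum>j<s. b j * a j)" "y = (\<Sum>j<s. b' j * a j)" by auto
    then have "x + y = (\<Sum>j<s. (b j + b' j) * a j)" by (simp add: sum.distrib algebra_simps)
    then show "x + y \<in> ?I" by (intro CollectI exI)
  next
    fix c x assume "x \<in> ?I"
    then obtain b where "x = (\<Sum>j<s. b j * a j)" by auto
    then have "c * x = (\<Sum>j<s. (c * b j) * a j)" by (simp add: sum_distrib_left algebra_simps)
    then show "c * x \<in> ?I" by (intro CollectI exI)
  qed
  moreover have "a ` {..<s} \<subseteq> ?I"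
  proof
    fix y assume "y \<in> a ` {..<s}"
    then obtain j0 where j0: "j0 < s" "y = a j0" by auto
    have "(\<Sum>j<s. (if j = j0 then 1 else 0) * a j) = (\<Sum>j<s. if j = j0 then a j else 0)"
      by (intro sum.cong) auto
    also have "\<dots> = a j0" using j0 by simp
    finally have "(\<Sum>j<s. (if j = j0 then 1 else 0) * a j) = a j0" .
    then show "y \<in> ?I" using j0(2) by (intro CollectI exI[of _ "\<lambda>j. if j = j0 then 1 else 0"]) simp
  qed
  ultimately have "ideal_gen (a ` {..<s}) \<subseteq> ?I" by (rule ideal_gen_least)
  then have "x \<in> ?I" using assms by blast
  then show ?thesis by simp
qed

section \<open>Spans of Koszul elements\<close>

inductive_set kspan :: "'a::comm_ring_1 kel set \<Rightarrow> 'a kel set" for M where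
  kz: "kzero \<in> kspan M"
| kg: "x \<in> M \<Longrightarrow> x \<in> kspan M"
| ka: "x \<in> kspan M \<Longrightarrow> y \<in> kspan M \<Longrightarrow> kadd x y \<in> kspan M"
| ks: "x \<in> kspan M \<Longrightarrow> ksmult c x \<in> kspan M"

lemma kspan_coeff:
  assumes "is_ideal I" "\<forall>m\<in>M. m T \<in> I" "x \<in> kspan M"
  shows "x T \<in> I"
  using assms(3)
proof (induction x rule: kspan.induct)
  case kz then show ?case using assms(1) by (simp add: kzero_def is_ideal_def)
next
  case (kg x) then show ?case using assms(2) by blast
next
  case (ka x y) then show ?case using assms(1) by (simp add: kadd_def is_ideal_def)
next
  case (ks x c) then show ?case using assms(1) by (simp add: ksmult_def is_ideal_def)
qed

lemma kspan_trans:
  assumes "M \<subseteq> kspan N" "x \<in> kspan M"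
  shows "x \<in> kspan N"
  using assms(2) by (induction x rule: kspan.induct) (use assms(1) in \<open>auto intro: kspan.intros\<close>)

lemma kspan_wedge_left:
  assumes "x \<in> kspan M"
  shows "wedge w x \<in> kspan ((\<lambda>m. wedge w m) ` M)"
  using assms
  by (induction x rule: kspan.induct)
     (auto simp: wedge_kzero_right wedge_kadd_right wedge_ksmult_right intro: kspan.intros)

lemma kspan_wedge_right:
  assumes "x \<in> kspan M"
  shows "wedge x w \<in> kspan ((\<lambda>m. wedge m w) ` M)"
  using assms
  by (induction x rule: kspan.induct)
     (auto simp: wedge_kzero_left wedge_kadd_left wedge_ksmult_left intro: kspan.intros)

lemma kspan_wedge:
  assumes "x \<in> kspan A" "y \<in> kspan B"
  shows "wedge x y \<in> kspan {wedge a b | a b. a \<in> A \<and> b \<in> B}"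
  using assms(1)
proof (induction x rule: kspan.induct)
  case kz then show ?case by (simp add: wedge_kzero_left kspan.kz)
next
  case (kg a)
  have "(\<lambda>m. wedge a m) ` B \<subseteq> kspan {wedge a b | a b. a \<in> A \<and> b \<in> B}"
    using kg by (auto intro: kspan.kg)
  then show ?case using kspan_trans kspan_wedge_left[OF assms(2)] by blast
next
  case (ka x y) then show ?case by (simp add: wedge_kadd_left kspan.ka)
next
  case (ks x c) then show ?case by (simp add: wedge_ksmult_left kspan.ks)
qed

lemma subalg_kspan:
  assumes "\<forall>g\<in>G. fin g" "x \<in> subalg G"
  shows "x \<in> kspan (P ` lists G)"
  using assms(2)
proof (induction x rule: subalg.induct)
  case one
  have "kone = P []" by (simp add: P_Nil)
  then show ?case by (auto intro: kspan.kg)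
next
  case (gen x)
  have "P [x] = x" using assms(1) gen by (simp add: P_Cons P_Nil wedge_kone_right)
  then have "x \<in> P ` lists G" using gen by (metis image_eqI lists.Cons lists.Nil)
  then show ?case by (rule kspan.kg)
next
  case (add x y) then show ?case by (auto intro: kspan.ka)
next
  case (smult x c) then show ?case by (auto intro: kspan.ks)
next
  case (mult x y)
  have "{wedge a b | a b. a \<in> P ` lists G \<and> b \<in> P ` lists G} \<subseteq> kspan (P ` lists G)"
  proof
    fix z assume "z \<in> {wedge a b | a b. a \<in> P ` lists G \<and> b \<in> P ` lists G}"
    then obtain xs ys where "xs \<in> lists G" "ys \<in> lists G" "z = wedge (P xs) (P ys)" by blast
    then have "z = P (xs @ ys)" "xs @ ys \<in> lists G" by (simp_all add: P_append)
    then show "z \<in> kspan (P ` lists G)" by (intro kspan.kg) auto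
  qed
  then show ?case using kspan_wedge[OF mult.IH] kspan_trans by blast
qed

lemma ksum_nonzero:
  fixes c :: "'b \<Rightarrow> 'a::comm_ring_1"
  assumes "(\<Sum>j\<in>A. c j * g j S) \<noteq> 0"
  shows "\<exists>j\<in>A. g j S \<noteq> 0"
proof (rule ccontr)
  assume "\<not> ?thesis"
  then have "(\<Sum>j\<in>A. c j * g j S) = 0" by (intro sum.neutral) auto
  then show False using assms by simp
qed

lemma homog_ksum:
  assumes "\<forall>j\<in>A. homog k (g j)"
  shows "homog k (\<lambda>S. \<Sum>j\<in>A. c j * g j S)"
  unfolding homog_def
proof (intro allI impI)
  fix S assume h: "(\<Sum>j\<in>A. c j * g j S) \<noteq> 0"
  obtain j where "j \<in> A" "g j S \<noteq> 0" using ksum_nonzero[where c=c and A=A and g=g and S=S, OF h] by blast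
  then show "card S = k" using assms unfolding homog_def by blast
qed

lemma kelem_ksum:
  assumes "\<forall>j\<in>A. kelem r (g j)"
  shows "kelem r (\<lambda>S. \<Sum>j\<in>A. c j * g j S)"
  unfolding kelem_def
proof (intro allI impI)
  fix S assume h: "(\<Sum>j\<in>A. c j * g j S) \<noteq> 0"
  obtain j where "j \<in> A" "g j S \<noteq> 0" using ksum_nonzero[where c=c and A=A and g=g and S=S, OF h] by blast
  then show "S \<subseteq> {..<r}" using assms unfolding kelem_def by blast
qed

lemma kzero_subalg: "(kzero :: 'a::comm_ring_1 kel) \<in> subalg G"
proof -
  have "ksmult 0 kone = (kzero :: 'a::comm_ring_1 kel)" unfolding ksmult_def kzero_def by simp
  moreover have "ksmult 0 kone \<in> subalg G" by (intro subalg.smult subalg.one)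
  ultimately show ?thesis by simp
qed

lemma ksum_subalg:
  assumes "finite A" "\<forall>j\<in>A. g j \<in> subalg G"
  shows "(\<lambda>S. \<Sum>j\<in>A. c j * g j S) \<in> subalg G"
  using assms
proof (induction A rule: finite_induct)
  case empty
  have "(\<lambda>S. \<Sum>j\<in>{}. c j * g j S) = kzero" by (simp add: kzero_def)
  then show ?case using kzero_subalg by simp
next
  case (insert j A)
  have "(\<lambda>S. \<Sum>j\<in>insert j A. c j * g j S) = kadd (ksmult (c j) (g j)) (\<lambda>S. \<Sum>j\<in>A. c j * g j S)"
    using insert by (simp add: kadd_def ksmult_def)
  moreover have "ksmult (c j) (g j) \<in> subalg G" using insert by (simp add: subalg.smult)
  moreover have "(\<lambda>S. \<Sum>j\<in>A. c j * g j S) \<in> subalg G" using insert by simp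
  ultimately show ?case by (simp add: subalg.add)
qed

lemma P_subalg: "\<forall>x\<in>set xs. x \<in> subalg G \<Longrightarrow> P xs \<in> subalg G"
  by (induction xs) (auto simp: P_Nil P_Cons intro: subalg.one subalg.mult)

lemma zeta_single: "i < r \<Longrightarrow> zeta r c j {i} = c i j"
proof -
  assume i: "i < r"
  have "zeta r c j {i} = (\<Sum>i'<r. if i' = i then c i j else 0)"
    unfolding zeta_def ebasis_def by (intro sum.cong) auto
  also have "\<dots> = c i j" using i by simp
  finally show ?thesis .
qed

lemma zeta_homog: "homog 1 (zeta r c j)"
  unfolding zeta_def by (rule homog_ksum) (simp add: homog_ebasis)

lemma zeta_homog_Suc0[simp]: "homog (Suc 0) (zeta r c j)"
  using zeta_homog by simp

lemma zeta_kelem: "kelem r (zeta r c j)"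
  unfolding zeta_def by (rule kelem_ksum) (simp add: kelem_ebasis)

lemma kcycles1_props:
  assumes "z \<in> kcycles1 r f"
  shows "kelem r z" "homog 1 z" "(\<Sum>i<r. z {i} * f i) = 0"
proof -
  show "kelem r z" "homog 1 z" using assms unfolding kcycles1_def kcycles_def by auto
  have "kdiff r f z {} = 0" using assms unfolding kcycles1_def kcycles_def by simp
  then show "(\<Sum>i<r. z {i} * f i) = 0" unfolding kdiff_def by (simp add: mult.commute)
qed

lemma detn_cong:
  assumes "\<forall>i<n. \<forall>k<n. M i k = M' i k"
  shows "detn n M = detn n M'"
  unfolding detn_def
proof (rule sum.cong[OF refl])
  fix p assume "p \<in> {p. p permutes {..<n}}"
  then have p: "p permutes {..<n}" by simp
  have "(\<Prod>i<n. M i (p i)) = (\<Prod>i<n. M' i (p i))"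
  proof (rule prod.cong[OF refl])
    fix i assume "i \<in> {..<n}"
    then have "i < n" "p i < n" using permutes_in_image[OF p, of i] by auto
    then show "M i (p i) = M' i (p i)" using assms by simp
  qed
  then show "of_int (sign p) * (\<Prod>i<n. M i (p i)) = of_int (sign p) * (\<Prod>i<n. M' i (p i))" by simp
qed

lemma neg1_pow_sq: "((- 1::'a::comm_ring_1) ^ n) * (- 1) ^ n = 1"
  by (induction n) (simp_all add: algebra_simps)

lemma P_anticomm':
  assumes u: "homog 1 u" and xs: "\<forall>x\<in>set xs. homog 1 x"
  shows "wedge u (P xs) = ksmult ((- 1) ^ length xs) (wedge (P xs) u)"
  using P_anticomm[OF u xs] by (simp add: ksmult_ksmult neg1_pow_sq ksmult_one)

definition Mset :: "'a::comm_ring_1 kel set \<Rightarrow> 'a kel set \<Rightarrow> nat \<Rightarrow> 'a kel set" where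
  "Mset A B n = {wedge (P xs) (P ys) | xs ys. xs \<in> lists A \<and> ys \<in> lists B \<and> length xs + length ys = n}"

lemma P_Mset:
  assumes A: "\<forall>x\<in>A. homog 1 x" and B: "\<forall>y\<in>B. homog 1 y"
    and ws: "\<forall>w\<in>set ws. \<exists>p q. w = kadd p q \<and> p \<in> A \<and> q \<in> B"
  shows "P ws \<in> kspan (Mset A B (length ws))"
  using ws
proof (induction ws)
  case Nil
  have "P [] = wedge (P []) (P [])" by (simp add: P_Nil wedge_kone_left fin_kone)
  then have "P [] \<in> Mset A B 0" unfolding Mset_def by force
  then show ?case by (simp add: kspan.kg)
next
  case (Cons w ws)
  obtain p q where w: "w = kadd p q" "p \<in> A" "q \<in> B" using Cons.prems by auto
  have IH: "P ws \<in> kspan (Mset A B (length ws))" using Cons by simp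
  have "(\<lambda>m. wedge w m) ` Mset A B (length ws) \<subseteq> kspan (Mset A B (length (w # ws)))"
  proof
    fix z assume "z \<in> (\<lambda>m. wedge w m) ` Mset A B (length ws)"
    then obtain xs ys where xy: "xs \<in> lists A" "ys \<in> lists B" "length xs + length ys = length ws"
      and z: "z = wedge w (wedge (P xs) (P ys))"
      unfolding Mset_def by blast
    have hx: "\<forall>x\<in>set xs. homog 1 x" using xy A by auto
    have z1: "wedge p (wedge (P xs) (P ys)) = wedge (P (p # xs)) (P ys)"
      by (simp add: P_Cons wedge_assoc)
    have "wedge q (wedge (P xs) (P ys)) = wedge (wedge q (P xs)) (P ys)" by (simp add: wedge_assoc)
    also have "\<dots> = ksmult ((- 1) ^ length xs) (wedge (P xs) (P (q # ys)))"
      using P_anticomm'[OF _ hx, of q] w B by (simp add: wedge_ksmult_left P_Cons wedge_assoc)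
    finally have z2: "wedge q (wedge (P xs) (P ys)) = ksmult ((- 1) ^ length xs) (wedge (P xs) (P (q # ys)))" .
    have m1: "wedge (P (p # xs)) (P ys) \<in> Mset A B (length (w # ws))"
      unfolding Mset_def using xy w by (intro CollectI exI[of _ "p # xs"] exI[of _ ys]) auto
    have m2: "wedge (P xs) (P (q # ys)) \<in> Mset A B (length (w # ws))"
      unfolding Mset_def using xy w by (intro CollectI exI[of _ xs] exI[of _ "q # ys"]) auto
    have "z = kadd (wedge (P (p # xs)) (P ys)) (ksmult ((- 1) ^ length xs) (wedge (P xs) (P (q # ys))))"
      unfolding z w(1) wedge_kadd_left z1 z2 ..
    then show "z \<in> kspan (Mset A B (length (w # ws)))"
      using m1 m2 by (auto intro: kspan.intros)
  qed
  then show ?case using kspan_wedge_left[OF IH, of w] kspan_trans by (simp add: P_Cons)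
qed

lemma vec_single:
  fixes w :: "nat \<Rightarrow> 'a::comm_ring_1"
  shows "i < r \<Longrightarrow> (\<Sum>i'<r. w i' * ebasis i' {i}) = w i"
proof -
  assume i: "i < r"
  have "(\<Sum>i'<r. w i' * ebasis i' {i}) = (\<Sum>i'<r. if i' = i then w i else 0)"
    unfolding ebasis_def by (intro sum.cong) auto
  also have "\<dots> = w i" using i by simp
  finally show ?thesis .
qed

lemma card_insert_not1:
  assumes "i \<notin> T" "T \<noteq> {}"
  shows "card (insert i T) \<noteq> 1"
proof (cases "finite T")
  case True
  then have "card (insert i T) = Suc (card T)" using assms(1) by simp
  moreover have "card T \<noteq> 0" using True assms(2) by simp
  ultimately show ?thesis by simp
next
  case False
  then show ?thesis by simp
qed

lemma partA:
  fixes f a :: "nat \<Rightarrow> 'a::comm_ring_1" and c :: "nat \<Rightarrow> nat \<Rightarrow> 'a" and r s :: nat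
  assumes as: "\<forall>j<s. a j = (\<Sum>i<r. c i j * f i)"
  shows "prod_part r (Gamma r c s) (subalg (kcycles1 r f)) \<subseteq> Fitt0 r f (ideal_gen (a ` {..<s}))"
proof -
  let ?Zs = "zeta r c ` {..<s}"
  let ?Z1 = "kcycles1 r f"
  let ?J = "ideal_gen (a ` {..<s})"
  let ?F = "Fitt0 r f ?J"
  have idF: "is_ideal ?F" unfolding Fitt0_def by (rule ideal_gen_is_ideal)
  have topP: "P us {..<r} \<in> ?F" if us: "us \<in> lists (?Zs \<union> ?Z1)" for us
  proof -
    have props: "\<forall>u\<in>set us. kelem r u \<and> homog 1 u"
    proof
      fix u assume "u \<in> set us"
      then have "u \<in> ?Zs \<union> ?Z1" using us by auto
      then show "kelem r u \<and> homog 1 u"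
      proof
        assume "u \<in> ?Zs"
        then obtain j where "u = zeta r c j" by auto
        then show ?thesis using zeta_kelem[of r c j] zeta_homog[of r c j] by simp
      next
        assume "u \<in> ?Z1"
        then show ?thesis using kcycles1_props(1,2) by blast
      qed
    qed
    show ?thesis
    proof (cases "length us = r")
      case False
      have "homog (length us) (P us)" using homog_P props by blast
      then have "P us {..<r} = 0" using False unfolding homog_def by auto
      then show ?thesis using is_ideal_zero[OF idF] by simp
    next
      case True
      have eq: "P us {..<r} = detn r (\<lambda>i k. (us ! k) {i})" by (rule P_det[OF True props])
      have rel: "\<forall>k<r. (\<Sum>i<r. (us ! k) {i} * f i) \<in> ?J"
      proof (intro allI impI)
        fix k assume "k < r"
        then have "us ! k \<in> ?Zs \<union> ?Z1" using us True by (auto simp: in_lists_conv_set)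
        then show "(\<Sum>i<r. (us ! k) {i} * f i) \<in> ?J"
        proof
          assume "us ! k \<in> ?Zs"
          then obtain j where j: "j < s" "us ! k = zeta r c j" by auto
          have "(\<Sum>i<r. (us ! k) {i} * f i) = (\<Sum>i<r. c i j * f i)"
            unfolding j(2) by (intro sum.cong) (auto simp: zeta_single)
          also have "\<dots> = a j" using as j(1) by simp
          finally show ?thesis using j(1) by (simp add: ideal_gen_sub)
        next
          assume "us ! k \<in> ?Z1"
          then have "(\<Sum>i<r. (us ! k) {i} * f i) = 0" by (rule kcycles1_props(3))
          then show ?thesis using is_ideal_zero[OF ideal_gen_is_ideal] by simp
        qed
      qed
      have "detn r (\<lambda>i k. (us ! k) {i}) \<in> {detn r (\<lambda>i k. V k i) | V. \<forall>k<r. (\<Sum>i<r. V k i * f i) \<in> ?J}"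
        using rel by (intro CollectI exI[of _ "\<lambda>k i. (us ! k) {i}"]) simp
      then show ?thesis unfolding eq Fitt0_def by (rule ideal_gen_sub)
    qed
  qed
  show ?thesis unfolding prod_part_def
  proof (rule ideal_gen_least[OF idF], rule subsetI)
    fix z assume "z \<in> {wedge x y {..<r} | x y j. j \<le> r \<and> x \<in> Gamma r c s \<and> homog j x \<and> y \<in> subalg ?Z1 \<and> homog (r - j) y}"
    then obtain x y where z: "z = wedge x y {..<r}" and x: "x \<in> subalg ?Zs" and y: "y \<in> subalg ?Z1"
      unfolding Gamma_def by blast
    have finZs: "\<forall>g\<in>?Zs. fin g" using zeta_kelem kelem_fin by blast
    have finZ1: "\<forall>g\<in>?Z1. fin g" using kcycles1_props(1) kelem_fin by blast
    have "wedge x y \<in> kspan {wedge a b | a b. a \<in> P ` lists ?Zs \<and> b \<in> P ` lists ?Z1}"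
      by (rule kspan_wedge[OF subalg_kspan[OF finZs x] subalg_kspan[OF finZ1 y]])
    moreover have "\<forall>m\<in>{wedge a b | a b. a \<in> P ` lists ?Zs \<and> b \<in> P ` lists ?Z1}. m {..<r} \<in> ?F"
    proof
      fix m assume "m \<in> {wedge a b | a b. a \<in> P ` lists ?Zs \<and> b \<in> P ` lists ?Z1}"
      then obtain xs ys where "xs \<in> lists ?Zs" "ys \<in> lists ?Z1" "m = wedge (P xs) (P ys)" by blast
      then have "m = P (xs @ ys)" "xs @ ys \<in> lists (?Zs \<union> ?Z1)" by (auto simp: P_append)
      then show "m {..<r} \<in> ?F" using topP by simp
    qed
    ultimately show "z \<in> ?F" unfolding z by (intro kspan_coeff[OF idF]) auto
  qed
qed

lemma partB:
  fixes f a :: "nat \<Rightarrow> 'a::comm_ring_1" and c :: "nat \<Rightarrow> nat \<Rightarrow> 'a" and r s :: nat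
  assumes as: "\<forall>j<s. a j = (\<Sum>i<r. c i j * f i)"
  shows "Fitt0 r f (ideal_gen (a ` {..<s})) \<subseteq> prod_part r (Gamma r c s) (subalg (kcycles1 r f))"
proof -
  let ?Zs = "zeta r c ` {..<s}"
  let ?Z1 = "kcycles1 r f"
  let ?J = "ideal_gen (a ` {..<s})"
  let ?L = "prod_part r (Gamma r c s) (subalg ?Z1)"
  let ?G1 = "{x \<in> Gamma r c s. homog 1 x}"
  have idL: "is_ideal ?L" unfolding prod_part_def by (rule ideal_gen_is_ideal)
  show ?thesis unfolding Fitt0_def
  proof (rule ideal_gen_least[OF idL], rule subsetI)
    fix z assume "z \<in> {detn r (\<lambda>i k. V k i) | V. \<forall>k<r. (\<Sum>i<r. V k i * f i) \<in> ?J}"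
    then obtain V where z: "z = detn r (\<lambda>i k. V k i)" and V: "\<forall>k<r. (\<Sum>i<r. V k i * f i) \<in> ?J"
      by blast
    have "\<forall>k. \<exists>bk. k < r \<longrightarrow> (\<Sum>i<r. V k i * f i) = (\<Sum>j<s. bk j * a j)"
      using V ideal_gen_repr by blast
    then have "\<exists>b. \<forall>k. k < r \<longrightarrow> (\<Sum>i<r. V k i * f i) = (\<Sum>j<s. b k j * a j)"
      by (rule choice)
    then obtain b where b: "\<And>k. k < r \<Longrightarrow> (\<Sum>i<r. V k i * f i) = (\<Sum>j<s. b k j * a j)" by blast
    define vk where "vk k = (\<lambda>S. \<Sum>i<r. V k i * ebasis i S)" for k
    define pk where "pk k = (\<lambda>S. \<Sum>j<s. b k j * zeta r c j S)" for k
    define qk where "qk k = (\<lambda>S. vk k S - pk k S)" for k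
    define us where "us = map vk [0..<r]"
    have vk_single: "vk k {i} = V k i" if "i < r" for k i
      unfolding vk_def using vec_single[OF that] .
    have pk_single: "pk k {i} = (\<Sum>j<s. b k j * c i j)" if "i < r" for k i
      unfolding pk_def by (simp add: zeta_single that)
    have vk_kelem: "kelem r (vk k)" for k
      unfolding vk_def by (rule kelem_ksum) (simp add: kelem_ebasis)
    have vk_homog: "homog 1 (vk k)" for k
      unfolding vk_def by (rule homog_ksum) (simp add: homog_ebasis)
    have pk_kelem: "kelem r (pk k)" for k
      unfolding pk_def by (rule kelem_ksum) (simp add: zeta_kelem)
    have pk_homog: "homog 1 (pk k)" for k
      unfolding pk_def by (rule homog_ksum) (simp add: zeta_homog)
    have pk_Gamma: "pk k \<in> Gamma r c s" for k
      unfolding pk_def Gamma_def by (rule ksum_subalg) (auto intro: subalg.gen)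
    have qk_kelem: "kelem r (qk k)" for k
      using vk_kelem[of k] pk_kelem[of k] unfolding kelem_def qk_def by (metis diff_self)
    have qk_homog: "homog 1 (qk k)" for k
      using vk_homog[of k] pk_homog[of k] unfolding homog_def qk_def by (metis diff_self)
    have qk_cyc: "qk k \<in> ?Z1" if k: "k < r" for k
    proof -
      have "kdiff r f (qk k) = (\<lambda>_. 0)"
      proof
        fix T
        show "kdiff r f (qk k) T = 0"
        proof (cases "T = {}")
          case True
          have "kdiff r f (qk k) T = (\<Sum>i<r. f i * (V k i - (\<Sum>j<s. b k j * c i j)))"
            unfolding kdiff_def True qk_def
            by (intro sum.cong) (auto simp: vk_single pk_single)
          also have "\<dots> = (\<Sum>i<r. V k i * f i) - (\<Sum>j<s. b k j * (\<Sum>i<r. c i j * f i))"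
            by (simp add: algebra_simps sum_subtractf sum_distrib_left sum_distrib_right sum.swap[of _ "{..<r}"])
          also have "\<dots> = (\<Sum>i<r. V k i * f i) - (\<Sum>j<s. b k j * a j)"
            using as by simp
          also have "\<dots> = 0" using b[OF k] by simp
          finally show ?thesis .
        next
          case False
          have "qk k (insert i T) = 0" if "i \<in> {..<r} - T" for i
            using qk_homog[of k] card_insert_not1[of i T] that False unfolding homog_def by auto
          then show ?thesis unfolding kdiff_def by (intro sum.neutral) auto
        qed
      qed
      then show ?thesis unfolding kcycles1_def kcycles_def using qk_kelem qk_homog by auto
    qed
    have decomp: "vk k = kadd (pk k) (qk k)" for k
      unfolding kadd_def qk_def by simp
    have len: "length us = r" unfolding us_def by simp
    have props: "\<forall>u\<in>set us. kelem r u \<and> homog 1 u"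
      unfolding us_def using vk_kelem vk_homog by auto
    have "P us {..<r} = detn r (\<lambda>i k. (us ! k) {i})" by (rule P_det[OF len props])
    also have "\<dots> = z" unfolding z
      by (rule detn_cong) (simp add: us_def vk_single)
    finally have Pz: "P us {..<r} = z" .
    have ws: "\<forall>w\<in>set us. \<exists>p q. w = kadd p q \<and> p \<in> ?G1 \<and> q \<in> ?Z1"
    proof
      fix w assume "w \<in> set us"
      then obtain k where k: "k < r" "w = vk k" unfolding us_def by auto
      show "\<exists>p q. w = kadd p q \<and> p \<in> ?G1 \<and> q \<in> ?Z1"
        using decomp[of k] pk_Gamma[of k] pk_homog[of k] qk_cyc[OF k(1)] k(2) by blast
    qed
    have G1h: "\<forall>x\<in>?G1. homog 1 x" by auto
    have Z1h: "\<forall>y\<in>?Z1. homog 1 y" using kcycles1_props(2) by blast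
    have inM: "P us \<in> kspan (Mset ?G1 ?Z1 r)"
      using P_Mset[OF G1h Z1h ws] len by simp
    have "\<forall>m\<in>Mset ?G1 ?Z1 r. m {..<r} \<in> ?L"
    proof
      fix m assume "m \<in> Mset ?G1 ?Z1 r"
      then obtain xs ys where xy: "xs \<in> lists ?G1" "ys \<in> lists ?Z1" "length xs + length ys = r"
        and m: "m = wedge (P xs) (P ys)" unfolding Mset_def by blast
      have "P xs \<in> Gamma r c s" unfolding Gamma_def
        by (rule P_subalg) (use xy(1) in \<open>auto simp: Gamma_def\<close>)
      moreover have "homog (length xs) (P xs)" by (rule homog_P) (use xy(1) in auto)
      moreover have "P ys \<in> subalg ?Z1" by (rule P_subalg) (use xy(2) in \<open>auto intro: subalg.gen\<close>)
      moreover have "homog (r - length xs) (P ys)"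
      proof -
        have "r - length xs = length ys" using xy(3) by simp
        moreover have "homog (length ys) (P ys)" by (rule homog_P) (use xy(2) Z1h in auto)
        ultimately show ?thesis by simp
      qed
      moreover have "length xs \<le> r" using xy(3) by simp
      ultimately have "m {..<r} \<in> {wedge x y {..<r} | x y j. j \<le> r \<and> x \<in> Gamma r c s \<and> homog j x \<and> y \<in> subalg ?Z1 \<and> homog (r - j) y}"
        unfolding m by blast
      then show "m {..<r} \<in> ?L" unfolding prod_part_def by (rule ideal_gen_sub)
    qed
    then have "P us {..<r} \<in> ?L" by (rule kspan_coeff[OF idL _ inM])
    then show "z \<in> ?L" using Pz by simp
  qed
qed

theorem proposition4p18:
  fixes f a :: "nat \<Rightarrow> 'a::comm_ring_1" and c :: "nat \<Rightarrow> nat \<Rightarrow> 'a" and r s :: nat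
  assumes "\<forall>j<s. a j = (\<Sum>i<r. c i j * f i)"
  shows "prod_part r (Gamma r c s) (subalg (kcycles1 r f)) = Fitt0 r f (ideal_gen (a ` {..<s}))
     \<and> (kcycles r f = subalg (kcycles1 r f) \<longrightarrow> Kitt r f c s = Fitt0 r f (ideal_gen (a ` {..<s})))"
proof -
  have eq: "prod_part r (Gamma r c s) (subalg (kcycles1 r f)) = Fitt0 r f (ideal_gen (a ` {..<s}))"
    using partA[OF assms] partB[OF assms] by (rule subset_antisym)
  show ?thesis
  proof
    show "prod_part r (Gamma r c s) (subalg (kcycles1 r f)) = Fitt0 r f (ideal_gen (a ` {..<s}))" by (rule eq)
    show "kcycles r f = subalg (kcycles1 r f) \<longrightarrow> Kitt r f c s = Fitt0 r f (ideal_gen (a ` {..<s}))"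
      unfolding Kitt_def using eq by simp
  qed
qed

end
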